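(* Let $n\ge 1$, let $D^{n+1}\subset\mathbb{R}^{n+1}$ be the closed unit disk and $S^n=\partial D^{n+1}$ the unit sphere. Let $U_1,\ldots,U_k\subset D^{n+1}$ be the pieces of a cleavage of $D^{n+1}$ by oriented affine hyperplanes (as described in the context), let $N_i=U_i\cap S^n$, let $c_i$ be the centre of mass of $U_i$, and let $\beta=\bigcup_{i=1}^k \partial U_i$ be the blueprint, where $\partial U_i$ denotes the frontier of $U_i$ in $D^{n+1}$. For $s\in S^n\setminus N_i$ let $l(s,c_i)$ be the line segment from $s$ to $c_i$. Define $$\alpha\colon \coprod_{i=1}^k \left(S^n\setminus N_i\right)\to \beta$$ by sending $s$ in the $i$-th summand to the point of $\beta$ that lies on $l(s,c_i)$ and on the boundary $\partial U_i$. Then $\alpha$ is well defined (for each such $s$ there is exactly one such point, and it lies in $\beta$), and the restriction of $\alpha$ to any single connected component of any one of the complements $S^n\setminus N_i$ is injective.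
   Context: A cleavage of $D^{n+1}$ into $k$ pieces is obtained recursively: an oriented affine hyperplane $P$ (an element of $\mathrm{Gr}_n(\mathbb{R}^{n+1})\times\mathbb{R}$) cuts the current piece $W$ (initially $D^{n+1}$) into two closed pieces $W\cap H^+$ and $W\cap H^-$, where $H^\pm$ are the two closed half-spaces bounded by $P$ (the first piece being the one in the direction of the normal vector of $P$), each required to have nonempty interior; each of these pieces is then further cut recursively by further hyperplanes, according to a binary rooted planar tree whose $k-1$ internal vertices are decorated by the hyperplanes $P_1,\ldots,P_{k-1}$. The resulting $k$ pieces $U_1,\ldots,U_k$ (outgoing colours) are each of the form $D^{n+1}\cap H_{1}\cap\cdots\cap H_{r}$ for closed half-spaces $H_j$ bounded by some of the hyperplanes $P_1,\dots,P_{k-1}$, and have nonempty interior; their union is $D^{n+1}$ and distinct pieces meet only inside the union of the hyperplanes. The sets $N_i=U_i\cap S^n$ are the corresponding outgoing colours of the cleavage of $S^n$, and $S^n\setminus N_i$ is the complement of $N_i$ in $S^n$. *)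

theory Defs
  imports "HOL-Analysis.Analysis"
begin

text \<open>An oriented affine hyperplane is given by a nonzero normal vector u and an offset b:
  P = {x. u \<bullet> x = b}; the closed half-space in the direction of the normal is
  {x. u \<bullet> x \<ge> b}, the other one is {x. u \<bullet> x \<le> b}.\<close>

definition hs_plus :: "'a::euclidean_space \<times> real \<Rightarrow> 'a set" where
  "hs_plus P = {x. fst P \<bullet> x \<ge> snd P}"

definition hs_minus :: "'a::euclidean_space \<times> real \<Rightarrow> 'a set" where
  "hs_minus P = {x. fst P \<bullet> x \<le> snd P}"

datatype 'a cltree = Leaf | Node "'a \<times> real" "'a cltree" "'a cltree"

fun valid_cleavage :: "'a::euclidean_space set \<Rightarrow> 'a cltree \<Rightarrow> bool" where
  "valid_cleavage W Leaf = True"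
| "valid_cleavage W (Node P l r) =
     (fst P \<noteq> 0 \<and>
      interior (W \<inter> hs_plus P) \<noteq> {} \<and> interior (W \<inter> hs_minus P) \<noteq> {} \<and>
      valid_cleavage (W \<inter> hs_plus P) l \<and> valid_cleavage (W \<inter> hs_minus P) r)"

fun cleavage_pieces :: "'a::euclidean_space set \<Rightarrow> 'a cltree \<Rightarrow> 'a set list" where
  "cleavage_pieces W Leaf = [W]"
| "cleavage_pieces W (Node P l r) =
     cleavage_pieces (W \<inter> hs_plus P) l @ cleavage_pieces (W \<inter> hs_minus P) r"

definition centre_of_mass :: "'a::euclidean_space set \<Rightarrow> 'a" where
  "centre_of_mass U = (1 / measure lebesgue U) *\<^sub>R integral U (\<lambda>x. x)"

definition rel_bd :: "'a::euclidean_space set \<Rightarrow> 'a set \<Rightarrow> 'a set" where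
  "rel_bd D U = (top_of_set D) frontier_of U"

definition blueprint :: "'a::euclidean_space set \<Rightarrow> 'a set list \<Rightarrow> 'a set" where
  "blueprint D Us = (\<Union>U\<in>set Us. rel_bd D U)"

definition cleave_alpha :: "'a::euclidean_space set \<Rightarrow> 'a set \<Rightarrow> 'a \<Rightarrow> 'a" where
  "cleave_alpha D U s = (THE p. p \<in> closed_segment s (centre_of_mass U) \<and> p \<in> rel_bd D U)"

end

theory Submission
  imports Defs
begin

lemma cont_compact_integrable:
  fixes f :: "'a::euclidean_space \<Rightarrow> 'b::euclidean_space"
  assumes "compact S" "continuous_on S f"
  shows "f integrable_on S"
proof -
  have "integrable lborel (\<lambda>x. indicator S x *\<^sub>R f x)"
    by (rule borel_integrable_compact[OF assms])
  then have "integrable lebesgue (\<lambda>x. indicator S x *\<^sub>R f x)"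
    by (simp add: integrable_completion borel_measurable_integrable)
  then have "f absolutely_integrable_on S" by (simp add: set_integrable_def)
  then show ?thesis using set_lebesgue_integral_eq_integral(1) by blast
qed

lemma lebesgue_cball_pos:
  fixes z :: "'a::euclidean_space"
  assumes "r > 0" shows "measure lebesgue (cball z r) > 0"
proof -
  have "measure lebesgue (cball z r) = measure lborel (cball z r)"
    by (intro measure_completion) simp
  then show ?thesis using content_cball_pos[OF assms, of z] by simp
qed

lemma centroid_interior:
  fixes U :: "'a::euclidean_space set"
  assumes cU: "convex U" and kU: "compact U" and iU: "interior U \<noteq> {}"
  shows "centre_of_mass U \<in> interior U"
proof (rule ccontr)
  assume nc: "centre_of_mass U \<notin> interior U"
  define m where "m = measure lebesgue U"
  define c where "c = centre_of_mass U"
  define I where "I = integral U (\<lambda>x. x)"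
  have Ulm: "U \<in> lmeasurable" using kU by (rule lmeasurable_compact)
  have m1: "m = integral U (\<lambda>x. 1::real)" unfolding m_def by (rule lmeasure_integral[OF Ulm])
  have int1: "(\<lambda>x. 1::real) integrable_on U" by (rule integrable_on_const[OF Ulm])
  have intI: "(\<lambda>x. x) integrable_on U"
    by (rule cont_compact_integrable[OF kU]) (intro continuous_intros)
  obtain z where z: "z \<in> interior U" using iU by blast
  obtain r where r: "r > 0" "ball z r \<subseteq> interior U"
    using z open_interior open_contains_ball by blast
  have "cball z (r/2) \<subseteq> ball z r" using r by (simp add: cball_subset_ball_iff)
  then have cb: "cball z (r/2) \<subseteq> U" using r(2) interior_subset by blast
  have "measure lebesgue (cball z (r/2)) > 0" using r by (intro lebesgue_cball_pos) simp
  moreover have "measure lebesgue (cball z (r/2)) \<le> m"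
    unfolding m_def using cb Ulm by (intro measure_mono_fmeasurable) auto
  ultimately have mpos: "m > 0" by linarith
  have cdef: "m *\<^sub>R c = I" using mpos unfolding c_def centre_of_mass_def m_def[symmetric] I_def by simp
  have "0 \<notin> (\<lambda>x. x - c) ` interior U" using nc c_def by auto
  then obtain a where a: "a \<noteq> 0" "\<forall>x\<in>(\<lambda>x. x - c) ` interior U. 0 \<le> inner a x"
    using separating_hyperplane_set_0[of "(\<lambda>x. x - c) ` interior U"] convex_interior[OF cU]
    by auto
  have ge_int: "a \<bullet> x \<ge> a \<bullet> c" if "x \<in> interior U" for x
    using a(2) that by (auto simp: inner_diff_right)
  have "closure (interior U) \<subseteq> {x. a \<bullet> x \<ge> a \<bullet> c}"
    using ge_int by (intro closure_minimal) (auto intro: closed_halfspace_ge)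
  then have geU: "a \<bullet> x \<ge> a \<bullet> c" if "x \<in> U" for x
    using convex_closure_interior[OF cU iU] closure_subset that by auto
  define f where "f x = a \<bullet> x - a \<bullet> c" for x
  have intf: "f integrable_on S" if "compact S" for S
    unfolding f_def by (rule cont_compact_integrable[OF that]) (intro continuous_intros)
  have "integral U f = integral U (\<lambda>x. a \<bullet> x) - integral U (\<lambda>x. (a \<bullet> c) * 1)"
  proof -
    have "integral U (\<lambda>x. a \<bullet> x - (a \<bullet> c) * 1) = integral U (\<lambda>x. a \<bullet> x) - integral U (\<lambda>x. (a \<bullet> c) * 1)"
      by (rule integral_diff) (auto intro!: cont_compact_integrable[OF kU] continuous_intros)
    then show ?thesis unfolding f_def by simp
  qed
  also have "integral U (\<lambda>x. a \<bullet> x) = a \<bullet> I"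
    using integral_linear[OF intI bounded_linear_inner_right[of a]] unfolding I_def o_def by simp
  also have "integral U (\<lambda>x. (a \<bullet> c) * 1) = (a \<bullet> c) * m"
    using m1 integral_mult_right[of U "a \<bullet> c" "\<lambda>x. 1::real"] by simp
  also have "a \<bullet> I = m * (a \<bullet> c)" using cdef[symmetric] by simp
  finally have f0: "integral U f = 0" by simp
  define w where "w = z - (r/2) *\<^sub>R (a /\<^sub>R norm a)"
  have "w \<in> ball z r" using r a by (simp add: w_def dist_norm)
  then have "f w \<ge> 0" using r ge_int unfolding f_def by auto
  moreover have "f z = f w + (r/2) * norm a"
    using a by (simp add: f_def w_def inner_diff_right power2_norm_eq_inner[symmetric] power2_eq_square)
  ultimately have fz: "f z \<ge> (r/2) * norm a" by simp
  define \<delta> where "\<delta> = (r/2) * norm a / 2"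
  have dpos: "\<delta> > 0" using r a by (simp add: \<delta>_def)
  define \<rho> where "\<rho> = min (r/2) (\<delta> / norm a)"
  have rpos: "\<rho> > 0" using r a dpos by (simp add: \<rho>_def)
  have cb2: "cball z \<rho> \<subseteq> U" using cb \<rho>_def by auto
  have fge: "f x \<ge> \<delta>" if "x \<in> cball z \<rho>" for x
  proof -
    have n1: "norm (x - z) \<le> \<delta> / norm a" using that \<rho>_def by (auto simp: dist_norm norm_minus_commute)
    have "\<bar>a \<bullet> (x - z)\<bar> \<le> norm a * norm (x - z)" by (rule Cauchy_Schwarz_ineq2)
    also have "norm a * norm (x - z) \<le> norm a * (\<delta> / norm a)" using n1 by (rule mult_left_mono) simp
    also have "\<dots> = \<delta>" using a by simp
    finally have "\<bar>a \<bullet> (x - z)\<bar> \<le> \<delta>" .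
    then have h: "-\<delta> \<le> a \<bullet> x - a \<bullet> z" by (simp add: inner_diff_right)
    show ?thesis using h fz unfolding f_def \<delta>_def by linarith
  qed
  have "integral (cball z \<rho>) (\<lambda>x. \<delta> * 1) \<le> integral (cball z \<rho>) f"
    using fge by (intro integral_le intf) (auto intro!: cont_compact_integrable continuous_intros)
  also have "\<dots> \<le> integral U f"
    using cb2 geU by (intro integral_subset_le intf kU) (auto simp: f_def)
  also have "integral (cball z \<rho>) (\<lambda>x. \<delta> * 1) = \<delta> * measure lebesgue (cball z \<rho>)"
    using lmeasure_integral[of "cball z \<rho>"] integral_mult_right[of "cball z \<rho>" \<delta> "\<lambda>x. 1::real"] by simp
  finally have "\<delta> * measure lebesgue (cball z \<rho>) \<le> 0" using f0 by simp
  moreover have "measure lebesgue (cball z \<rho>) > 0" using rpos by (intro lebesgue_cball_pos)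
  ultimately show False using dpos mult_pos_pos[of \<delta> "measure lebesgue (cball z \<rho>)"] by linarith
qed


lemma seg_param:
  "x \<in> closed_segment a b \<longleftrightarrow> (\<exists>u. 0 \<le> u \<and> u \<le> 1 \<and> x = a + u *\<^sub>R (b - a))"
  by (simp add: in_segment algebra_simps)

lemma segA:
  fixes S :: "'a::euclidean_space set"
  assumes "convex S" "c \<in> interior S" "s + u *\<^sub>R (c - s) \<in> closure S" "u < v" "v \<le> 1"
  shows "s + v *\<^sub>R (c - s) \<in> interior S"
proof -
  define x where "x = s + u *\<^sub>R (c - s)"
  define e where "e = (v - u) / (1 - u)"
  have u1: "u < 1" using assms by simp
  have e: "0 < e" "e \<le> 1" using assms u1 by (auto simp: e_def field_simps)
  have "x - e *\<^sub>R (x - c) \<in> interior S"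
    using mem_interior_closure_convex_shrink[OF assms(1,2) _ e] assms(3) x_def by simp
  moreover have "e * (1 - u) = v - u" using u1 by (simp add: e_def)
  then have "x - e *\<^sub>R (x - c) = s + v *\<^sub>R (c - s)"
  proof -
    assume h: "e * (1 - u) = v - u"
    have "x - e *\<^sub>R (x - c) = s + (u + e * (1 - u)) *\<^sub>R (c - s)"
      by (simp add: x_def algebra_simps)
    also have "u + e * (1 - u) = v" using h by simp
    finally show ?thesis .
  qed
  ultimately show ?thesis by simp
qed


lemma rel_bd_char:
  fixes U D :: "'a::euclidean_space set"
  assumes "U \<subseteq> D" "closed U"
  shows "rel_bd D U = U \<inter> closure (D - U)"
  using assms closure_subset[of "D - U"]
  by (auto simp: rel_bd_def frontier_of_closures closure_of_subtopology closure_closed Int_absorb1 Int_commute)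


lemma alpha_unique:
  fixes U :: "'a::euclidean_space set"
  assumes cU: "convex U" and clU: "closed U" and UD: "U \<subseteq> D" and cD: "convex D"
    and c: "c \<in> interior U" and s: "s \<in> D" "s \<notin> U"
  shows "\<exists>!p. p \<in> closed_segment s c \<and> p \<in> U \<inter> closure (D - U)"
proof -
  define P where "P u = s + u *\<^sub>R (c - s)" for u
  have cU': "c \<in> U" using c interior_subset by blast
  have bdry: "p \<notin> interior U" if "p \<in> closure (D - U)" for p
    using that closure_mono[of "D - U" "- U"] closure_complement[of U] by auto
  have uniq: "u = v" if "0 \<le> u" "u \<le> 1" "0 \<le> v" "v \<le> 1" "P u \<in> U" "P v \<in> U"
      "P u \<notin> interior U" "P v \<notin> interior U" for u v
  proof (rule ccontr)
    assume "u \<noteq> v"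
    then consider "u < v" | "v < u" by linarith
    then show False
    proof cases
      case 1 then show ?thesis using segA[OF cU c, of s u v] that closure_subset unfolding P_def by blast
    next
      case 2 then show ?thesis using segA[OF cU c, of s v u] that closure_subset unfolding P_def by blast
    qed
  qed
  have conn: "connected (closed_segment s c)" by simp
  have "closed_segment s c \<inter> U \<noteq> {}" using cU' by auto
  moreover have "closed_segment s c - U \<noteq> {}" using s by auto
  ultimately obtain p where p: "p \<in> closed_segment s c" "p \<in> frontier U"
    using connected_Int_frontier[OF conn] by blast
  obtain u0 where u0: "0 \<le> u0" "u0 \<le> 1" "p = P u0" using p(1) unfolding seg_param P_def by blast
  have pU: "p \<in> U" "p \<notin> interior U" using p clU by (auto simp: frontier_def closure_closed)
  have u0pos: "0 < u0" using u0 pU s by (cases "u0 = 0") (auto simp: P_def)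
  have cDD: "c \<in> D" using cU' UD by auto
  have segD: "closed_segment s c \<subseteq> D" by (rule closed_segment_subset[OF s(1) cDD cD])
  have sub: "P ` {0..<u0} \<subseteq> D - U"
  proof
    fix y assume "y \<in> P ` {0..<u0}"
    then obtain t where t: "0 \<le> t" "t < u0" "y = P t" by auto
    have "y \<in> closed_segment s c" unfolding seg_param P_def using t u0 P_def
      by (intro exI[of _ t]) auto
    then have "y \<in> D" using segD by auto
    moreover have "y \<notin> U"
    proof
      assume "y \<in> U"
      then have "s + t *\<^sub>R (c - s) \<in> closure U" using t(3) closure_subset unfolding P_def by auto
      then have "s + u0 *\<^sub>R (c - s) \<in> interior U" by (rule segA[OF cU c _ t(2) u0(2)])
      then show False using pU u0 unfolding P_def by simp
    qed
    ultimately show "y \<in> D - U" by simp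
  qed
  have contP: "continuous_on (closure {0..<u0}) P" unfolding P_def by (intro continuous_intros)
  have "P ` closure {0..<u0} \<subseteq> closure (D - U)"
    by (rule image_closure_subset[OF contP closed_closure]) (use sub closure_subset in blast)
  then have "p \<in> closure (D - U)" using u0 u0pos by auto
  then have ex: "p \<in> closed_segment s c \<and> p \<in> U \<inter> closure (D - U)" using p pU by simp
  show ?thesis
  proof (rule ex1I[of _ p])
    show "p \<in> closed_segment s c \<and> p \<in> U \<inter> closure (D - U)" by (rule ex)
  next
    fix q assume q: "q \<in> closed_segment s c \<and> q \<in> U \<inter> closure (D - U)"
    obtain v where v: "0 \<le> v" "v \<le> 1" "q = P v" using q unfolding seg_param P_def by blast
    have "v = u0" using uniq[of v u0] v u0 q bdry pU by auto
    then show "q = p" using v u0 by simp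
  qed
qed


lemma alpha_inj:
  fixes c :: "'a::euclidean_space"
  assumes c: "c \<in> ball 0 1" and s: "s \<in> sphere 0 1" and s': "s' \<in> sphere 0 1"
    and p: "p \<in> closed_segment s c" "p \<in> closed_segment s' c" "p \<noteq> c"
  shows "s = s'"
proof -
  obtain u where u: "0 \<le> u" "u \<le> 1" "p = s + u *\<^sub>R (c - s)" using p seg_param by blast
  obtain v where v: "0 \<le> v" "v \<le> 1" "p = s' + v *\<^sub>R (c - s')" using p seg_param by blast
  have u1: "u < 1" using u p by (cases "u = 1") auto
  have v1: "v < 1" using v p by (cases "v = 1") auto
  have eu: "p - c = (1 - u) *\<^sub>R (s - c)" using u by (simp add: algebra_simps)
  have ev: "p - c = (1 - v) *\<^sub>R (s' - c)" using v by (simp add: algebra_simps)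
  have key: "x = x'" if x: "x \<in> sphere 0 1" "x' \<in> sphere 0 1"
      and a: "0 \<le> a" "a < 1" "0 \<le> b" "b < 1" "a \<le> b"
      and eq: "(1 - a) *\<^sub>R (x - c) = (1 - b) *\<^sub>R (x' - c)" for x x' a b
  proof (cases "a = b")
    case True then show ?thesis using eq a by simp
  next
    case False
    define e where "e = (b - a) / (1 - a)"
    have e: "0 < e" "e \<le> 1" using a False by (auto simp: e_def field_simps)
    have "x' - e *\<^sub>R (x' - c) \<in> interior (cball (0::'a) 1)"
      using mem_interior_closure_convex_shrink[of "cball (0::'a) 1" c x' e] e c x by auto
    moreover have "x' - e *\<^sub>R (x' - c) = x"
    proof -
      have h1: "(1 / (1 - a)) * (1 - a) = 1" using a by simp
      have "x - c = ((1 / (1 - a)) * (1 - a)) *\<^sub>R (x - c)" by (simp only: h1 scaleR_one)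
      also have "\<dots> = (1 / (1 - a)) *\<^sub>R ((1 - a) *\<^sub>R (x - c))" by (simp only: scaleR_scaleR)
      also have "\<dots> = (1 / (1 - a)) *\<^sub>R ((1 - b) *\<^sub>R (x' - c))" by (simp only: eq)
      also have "\<dots> = ((1 / (1 - a)) * (1 - b)) *\<^sub>R (x' - c)" by (simp only: scaleR_scaleR)
      also have "(1 / (1 - a)) * (1 - b) = (1 - b) / (1 - a)" by simp
      finally have "x - c = ((1 - b) / (1 - a)) *\<^sub>R (x' - c)" .
      moreover have "(1 - b) / (1 - a) = 1 - e" using a by (simp add: e_def field_simps)
      ultimately show ?thesis by (simp add: algebra_simps)
    qed
    ultimately show ?thesis using x by simp
  qed
  show ?thesis
  proof (cases "u \<le> v")
    case True then show ?thesis using key[OF s s' u(1) u1 v(1) v1] eu ev by simp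
  next
    case False then show ?thesis using key[OF s' s v(1) v1 u(1) u1] eu ev by simp
  qed
qed



lemma pieces_props:
  fixes W :: "'a::euclidean_space set"
  assumes "valid_cleavage W T" "convex W" "compact W" "interior W \<noteq> {}"
    "U \<in> set (cleavage_pieces W T)"
  shows "convex U \<and> compact U \<and> interior U \<noteq> {} \<and> U \<subseteq> W"
  using assms
proof (induction T arbitrary: W)
  case Leaf
  then show ?case by simp
next
  case (Node P l r)
  have hp: "convex (hs_plus P)" "closed (hs_plus P)" "convex (hs_minus P)" "closed (hs_minus P)"
    unfolding hs_plus_def hs_minus_def
    by (auto intro: convex_halfspace_ge convex_halfspace_le closed_halfspace_ge closed_halfspace_le)
  from Node.prems(5) consider "U \<in> set (cleavage_pieces (W \<inter> hs_plus P) l)"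
    | "U \<in> set (cleavage_pieces (W \<inter> hs_minus P) r)" by auto
  then show ?case
  proof cases
    case 1
    have "convex U \<and> compact U \<and> interior U \<noteq> {} \<and> U \<subseteq> W \<inter> hs_plus P"
      using Node.IH(1)[of "W \<inter> hs_plus P"] Node.prems hp 1
      by (auto intro: convex_Int compact_Int_closed)
    then show ?thesis by blast
  next
    case 2
    have "convex U \<and> compact U \<and> interior U \<noteq> {} \<and> U \<subseteq> W \<inter> hs_minus P"
      using Node.IH(2)[of "W \<inter> hs_minus P"] Node.prems hp 2
      by (auto intro: convex_Int compact_Int_closed)
    then show ?thesis by blast
  qed
qed

lemma alpha_facts:
  fixes U :: "'a::euclidean_space set"
  assumes cU: "convex U" "compact U" "interior U \<noteq> {}" "U \<subseteq> cball 0 1"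
    and s: "s \<in> sphere 0 1" "s \<notin> U"
  shows "(\<exists>!p. p \<in> closed_segment s (centre_of_mass U) \<and> p \<in> rel_bd (cball 0 1) U)"
    "cleave_alpha (cball 0 1) U s \<in> closed_segment s (centre_of_mass U)"
    "cleave_alpha (cball 0 1) U s \<in> rel_bd (cball 0 1) U"
proof -
  have c: "centre_of_mass U \<in> interior U" using centroid_interior cU by blast
  have rb: "rel_bd (cball 0 1) U = U \<inter> closure (cball 0 1 - U)"
    using cU by (intro rel_bd_char) (auto intro: compact_imp_closed)
  show ex: "\<exists>!p. p \<in> closed_segment s (centre_of_mass U) \<and> p \<in> rel_bd (cball 0 1) U"
    unfolding rb using alpha_unique[OF cU(1) compact_imp_closed[OF cU(2)] cU(4) convex_cball c] s
    by auto
  have "cleave_alpha (cball 0 1) U s \<in> closed_segment s (centre_of_mass U) \<and>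
        cleave_alpha (cball 0 1) U s \<in> rel_bd (cball 0 1) U"
    unfolding cleave_alpha_def by (rule theI'[OF ex])
  then show "cleave_alpha (cball 0 1) U s \<in> closed_segment s (centre_of_mass U)"
    "cleave_alpha (cball 0 1) U s \<in> rel_bd (cball 0 1) U" by auto
qed

theorem mainTheorem1:
  fixes T :: "'a::euclidean_space cltree"
  assumes "DIM('a) \<ge> 2"
    and "valid_cleavage (cball 0 1) T"
  shows "(\<forall>i < length (cleavage_pieces (cball 0 1) T).
           \<forall>s \<in> sphere 0 1 - (cleavage_pieces (cball 0 1) T ! i \<inter> sphere 0 1).
             (\<exists>!p. p \<in> closed_segment s (centre_of_mass (cleavage_pieces (cball 0 1) T ! i))
                  \<and> p \<in> rel_bd (cball 0 1) (cleavage_pieces (cball 0 1) T ! i))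
             \<and> cleave_alpha (cball 0 1) (cleavage_pieces (cball 0 1) T ! i) s
                 \<in> blueprint (cball 0 1) (cleavage_pieces (cball 0 1) T))
       \<and> (\<forall>i < length (cleavage_pieces (cball 0 1) T).
           \<forall>C \<in> components (sphere 0 1 - (cleavage_pieces (cball 0 1) T ! i \<inter> sphere 0 1)).
             inj_on (cleave_alpha (cball 0 1) (cleavage_pieces (cball 0 1) T ! i)) C)"
proof -
  define Us where "Us = cleavage_pieces (cball (0::'a) 1) T"
  have props: "convex U \<and> compact U \<and> interior U \<noteq> {} \<and> U \<subseteq> cball 0 1" if "U \<in> set Us" for U
    using pieces_props[OF assms(2) convex_cball compact_cball _ that[unfolded Us_def]] by simp
  have A: "(\<exists>!p. p \<in> closed_segment s (centre_of_mass (Us ! i)) \<and> p \<in> rel_bd (cball 0 1) (Us ! i))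
             \<and> cleave_alpha (cball 0 1) (Us ! i) s \<in> blueprint (cball 0 1) Us"
    if i: "i < length Us" and s: "s \<in> sphere 0 1 - (Us ! i \<inter> sphere 0 1)" for i s
  proof -
    have U: "Us ! i \<in> set Us" using i by simp
    note pr = props[OF U]
    have s': "s \<in> sphere 0 1" "s \<notin> Us ! i" using s by auto
    note f = alpha_facts[of "Us ! i" s] pr s'
    show ?thesis using f U unfolding blueprint_def by blast
  qed
  have B: "inj_on (cleave_alpha (cball 0 1) (Us ! i)) C"
    if i: "i < length Us" and C: "C \<in> components (sphere 0 1 - (Us ! i \<inter> sphere 0 1))" for i C
  proof (rule inj_onI)
    fix s s' assume ss: "s \<in> C" "s' \<in> C"
      and eq: "cleave_alpha (cball 0 1) (Us ! i) s = cleave_alpha (cball 0 1) (Us ! i) s'"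
    have U: "Us ! i \<in> set Us" using i by simp
    note pr = props[OF U]
    have Csub: "C \<subseteq> sphere 0 1 - (Us ! i \<inter> sphere 0 1)" using C in_components_subset by blast
    have s1: "s \<in> sphere 0 1" "s \<notin> Us ! i" using ss Csub by auto
    have s2: "s' \<in> sphere 0 1" "s' \<notin> Us ! i" using ss Csub by auto
    define c where "c = centre_of_mass (Us ! i)"
    have cint: "c \<in> interior (Us ! i)" unfolding c_def using centroid_interior pr by blast
    have "interior (Us ! i) \<subseteq> interior (cball (0::'a) 1)" using pr by (intro interior_mono) simp
    then have cb: "c \<in> ball 0 1" using cint by auto
    define p where "p = cleave_alpha (cball 0 1) (Us ! i) s"
    have p1: "p \<in> closed_segment s c" "p \<in> rel_bd (cball 0 1) (Us ! i)"
      using alpha_facts[of "Us ! i" s] pr s1 unfolding p_def c_def by auto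
    have p2: "p \<in> closed_segment s' c"
      using alpha_facts[of "Us ! i" s'] pr s2 eq unfolding p_def c_def by auto
    have rb: "rel_bd (cball 0 1) (Us ! i) = Us ! i \<inter> closure (cball 0 1 - Us ! i)"
      using pr by (intro rel_bd_char) (auto intro: compact_imp_closed)
    have "p \<notin> interior (Us ! i)"
      using p1(2) rb closure_mono[of "cball 0 1 - Us ! i" "- Us ! i"] closure_complement[of "Us ! i"] by auto
    then have "p \<noteq> c" using cint by auto
    then show "s = s'" using alpha_inj[OF cb s1(1) s2(1) p1(1) p2] by simp
  qed
  show ?thesis using A B unfolding Us_def by blast
qed

end
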